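(* Assume $h_0=0$. Then the unique minimizer $\pi^*$ of $\pi\mapsto\max_{(\mu,\sigma)\in D}F(\pi,\mu,\sigma)$ is $$\pi^*=\begin{cases}\dfrac{h_1\sigma_-}{\sigma_-^2+\mu_+^2},&\text{if } \sigma_+\sigma_--2\mu_+^2\le\sigma_-^2,\\[2mm] \dfrac{h_1}{\sigma_M},&\text{if } \sigma_-^2<\sigma_+\sigma_--2\mu_+^2.\end{cases}$$ Moreover, the minimum of $\psi$ over $D$ is attained on the side $\{x=\mu_+\}$ of $D$.
   Context: Let $0<\mu_-<\mu_+$ and $0<\sigma_-<\sigma_+$ be real numbers, $D=[\mu_-,\mu_+]\times[\sigma_-,\sigma_+]$, and $h_0,h_1\in\mathbb R$. For $\pi\in\mathbb R$ and $(\mu,\sigma)\in D$ put $F(\pi,\mu,\sigma)=(h_0-\pi\mu)^2+(h_1-\pi\sigma)^2$. Write $\mu_M=(\mu_++\mu_-)/2$ and $\sigma_M=(\sigma_++\sigma_-)/2$. For $(x,y)\in D$ let $$\psi(x,y)=\frac{(h_0x+h_1y)^2}{2\mu_Mx+2\sigma_My-\mu_-\mu_+-\sigma_-\sigma_+}.$$ *)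

theory Defs
  imports Complex_Main
begin

definition F :: "real \<Rightarrow> real \<Rightarrow> real \<Rightarrow> real \<Rightarrow> real \<Rightarrow> real" where
  "F h0 h1 \<pi> \<mu> \<sigma> = (h0 - \<pi> * \<mu>)^2 + (h1 - \<pi> * \<sigma>)^2"

text \<open>The worst case value: maximum of F over D = [mu_-,mu_+] x [sigma_-,sigma_+]
  (D is compact and F continuous, so the supremum is a maximum).\<close>
definition maxF :: "real \<Rightarrow> real \<Rightarrow> real \<Rightarrow> real \<Rightarrow> real \<Rightarrow> real \<Rightarrow> real \<Rightarrow> real" where
  "maxF h0 h1 \<mu>m \<mu>p \<sigma>m \<sigma>p \<pi> =
     (SUP p \<in> {\<mu>m..\<mu>p} \<times> {\<sigma>m..\<sigma>p}. F h0 h1 \<pi> (fst p) (snd p))"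

definition psi :: "real \<Rightarrow> real \<Rightarrow> real \<Rightarrow> real \<Rightarrow> real \<Rightarrow> real \<Rightarrow> real \<Rightarrow> real \<Rightarrow> real" where
  "psi h0 h1 \<mu>m \<mu>p \<sigma>m \<sigma>p x y =
     (h0 * x + h1 * y)^2 /
     (2 * ((\<mu>p + \<mu>m) / 2) * x + 2 * ((\<sigma>p + \<sigma>m) / 2) * y - \<mu>m * \<mu>p - \<sigma>m * \<sigma>p)"

end

theory Submission
  imports Defs
begin

lemma sq_between:
  fixes u v w :: real
  assumes "(w - u) * (w - v) \<le> 0"
  shows "w^2 \<le> max (u^2) (v^2)"
proof -
  have "(u \<le> w \<and> w \<le> v) \<or> (v \<le> w \<and> w \<le> u)"
    using assms unfolding mult_le_0_iff by auto
  hence "\<bar>w\<bar> \<le> \<bar>u\<bar> \<or> \<bar>w\<bar> \<le> \<bar>v\<bar>" by linarith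
  hence "w^2 \<le> u^2 \<or> w^2 \<le> v^2" by (metis abs_le_square_iff)
  thus ?thesis by linarith
qed

lemma prod_nonpos_or:
  fixes a b :: real
  assumes "a * b \<le> 0" shows "0 \<le> a \<or> 0 \<le> b"
proof (rule ccontr)
  assume "\<not> (0 \<le> a \<or> 0 \<le> b)"
  hence "a < 0" "b < 0" by auto
  hence "a * b > 0" by (rule mult_neg_neg)
  thus False using assms by simp
qed

lemma maxF_eq:
  fixes h1 \<mu>m \<mu>p \<sigma>m \<sigma>p \<pi> :: real
  assumes "0 < \<mu>m" "\<mu>m < \<mu>p" "0 < \<sigma>m" "\<sigma>m < \<sigma>p"
  shows "maxF 0 h1 \<mu>m \<mu>p \<sigma>m \<sigma>p \<pi> = (\<pi>*\<mu>p)^2 + max ((h1-\<pi>*\<sigma>m)^2) ((h1-\<pi>*\<sigma>p)^2)"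
  unfolding maxF_def
proof (rule cSup_eq_maximum)
  let ?D = "{\<mu>m..\<mu>p} \<times> {\<sigma>m..\<sigma>p}"
  let ?f = "\<lambda>p. F 0 h1 \<pi> (fst p) (snd p)"
  have Fe: "F 0 h1 \<pi> a b = (\<pi>*a)^2 + (h1-\<pi>*b)^2" for a b unfolding F_def by (simp add: power2_eq_square)
  show "(\<pi>*\<mu>p)^2 + max ((h1-\<pi>*\<sigma>m)^2) ((h1-\<pi>*\<sigma>p)^2) \<in> ?f ` ?D"
  proof (cases "(h1-\<pi>*\<sigma>p)^2 \<le> (h1-\<pi>*\<sigma>m)^2")
    case True
    have mem: "(\<mu>p,\<sigma>m) \<in> ?D" using assms by auto
    moreover have eq: "?f (\<mu>p,\<sigma>m) = (\<pi>*\<mu>p)^2 + max ((h1-\<pi>*\<sigma>m)^2) ((h1-\<pi>*\<sigma>p)^2)"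
      using True unfolding Fe fst_conv snd_conv max_def by simp
    show ?thesis by (rule image_eqI[where f="?f", OF eq[symmetric] mem])
  next
    case False
    have mem: "(\<mu>p,\<sigma>p) \<in> ?D" using assms by auto
    moreover have eq: "?f (\<mu>p,\<sigma>p) = (\<pi>*\<mu>p)^2 + max ((h1-\<pi>*\<sigma>m)^2) ((h1-\<pi>*\<sigma>p)^2)"
      using False unfolding Fe fst_conv snd_conv max_def by simp
    show ?thesis by (rule image_eqI[where f="?f", OF eq[symmetric] mem])
  qed
  fix z assume "z \<in> ?f ` ?D"
  then obtain \<mu> \<sigma> where m: "\<mu>m \<le> \<mu>" "\<mu> \<le> \<mu>p" "\<sigma>m \<le> \<sigma>" "\<sigma> \<le> \<sigma>p" and z: "z = F 0 h1 \<pi> \<mu> \<sigma>"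
    by auto
  have "\<mu>^2 \<le> \<mu>p^2" using m assms by (intro power_mono) auto
  hence 1: "(\<pi>*\<mu>)^2 \<le> (\<pi>*\<mu>p)^2" unfolding power_mult_distrib by (rule mult_left_mono) simp
  have "(h1-\<pi>*\<sigma> - (h1-\<pi>*\<sigma>m)) * (h1-\<pi>*\<sigma> - (h1-\<pi>*\<sigma>p)) = \<pi>^2 * ((\<sigma>-\<sigma>m)*(\<sigma>-\<sigma>p))"
    by (simp add: power2_eq_square algebra_simps)
  also have "(\<sigma>-\<sigma>m)*(\<sigma>-\<sigma>p) \<le> 0" using m by (simp add: mult_nonneg_nonpos)
  hence "\<pi>^2 * ((\<sigma>-\<sigma>m)*(\<sigma>-\<sigma>p)) \<le> 0" by (simp add: mult_nonneg_nonpos)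
  finally have 2: "(h1-\<pi>*\<sigma>)^2 \<le> max ((h1-\<pi>*\<sigma>m)^2) ((h1-\<pi>*\<sigma>p)^2)" by (rule sq_between)
  show "z \<le> (\<pi>*\<mu>p)^2 + max ((h1-\<pi>*\<sigma>m)^2) ((h1-\<pi>*\<sigma>p)^2)"
    using 1 2 unfolding z Fe by linarith
qed

lemma quad_id:
  fixes \<pi> t \<mu> s h1 :: real
  shows "(\<pi>*\<mu>)^2 + (h1 - \<pi>*s)^2 = ((t*\<mu>)^2 + (h1-t*s)^2) + (\<mu>^2+s^2)*(\<pi>-t)^2 + 2*(\<pi>-t)*((\<mu>^2+s^2)*t - h1*s)"
  by (simp add: power2_eq_square algebra_simps)


lemma key:
  fixes h1 \<mu>m \<mu>p \<sigma>m \<sigma>p \<pi>s :: real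
  assumes "0 < \<mu>m" "\<mu>m < \<mu>p" "0 < \<sigma>m" "\<sigma>m < \<sigma>p"
  defines "\<pi>s \<equiv> (if \<sigma>p * \<sigma>m - 2 * \<mu>p^2 \<le> \<sigma>m^2
                  then h1 * \<sigma>m / (\<sigma>m^2 + \<mu>p^2)
                  else h1 / ((\<sigma>p + \<sigma>m) / 2))"
  defines "G \<equiv> \<lambda>\<pi>. (\<pi>*\<mu>p)^2 + max ((h1-\<pi>*\<sigma>m)^2) ((h1-\<pi>*\<sigma>p)^2)"
  shows "G \<pi> \<ge> G \<pi>s + (\<mu>p^2+\<sigma>m^2)*(\<pi>-\<pi>s)^2"
proof -
  define k1 where "k1 = \<mu>p^2+\<sigma>m^2"
  define k2 where "k2 = \<mu>p^2+\<sigma>p^2"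
  define e where "e = \<pi> - \<pi>s"
  have k1p: "k1 > 0" unfolding k1_def using assms by (simp add: add_pos_pos)
  have k12: "k1 \<le> k2" unfolding k1_def k2_def using assms by (simp add: power_mono)
  have q1: "(\<pi>*\<mu>p)^2 + (h1 - \<pi>*\<sigma>m)^2 = ((\<pi>s*\<mu>p)^2 + (h1-\<pi>s*\<sigma>m)^2) + k1*e^2 + 2*e*(k1*\<pi>s - h1*\<sigma>m)"
    unfolding k1_def e_def by (rule quad_id)
  have q2: "(\<pi>*\<mu>p)^2 + (h1 - \<pi>*\<sigma>p)^2 = ((\<pi>s*\<mu>p)^2 + (h1-\<pi>s*\<sigma>p)^2) + k2*e^2 + 2*e*(k2*\<pi>s - h1*\<sigma>p)"
    unfolding k2_def e_def by (rule quad_id)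
  have Gge1: "G \<pi> \<ge> (\<pi>*\<mu>p)^2 + (h1 - \<pi>*\<sigma>m)^2" unfolding G_def by simp
  have Gge2: "G \<pi> \<ge> (\<pi>*\<mu>p)^2 + (h1 - \<pi>*\<sigma>p)^2" unfolding G_def by simp
  show ?thesis
  proof (cases "\<sigma>p * \<sigma>m - 2 * \<mu>p^2 \<le> \<sigma>m^2")
    case True
    hence ps: "\<pi>s = h1 * \<sigma>m / k1" unfolding \<pi>s_def k1_def by (simp add: add.commute)
    have A0: "k1*\<pi>s - h1*\<sigma>m = 0" using k1p unfolding ps by simp
    have id1: "(h1-\<pi>s*\<sigma>m)^2 - (h1-\<pi>s*\<sigma>p)^2 = (\<sigma>p-\<sigma>m) * (\<pi>s*(2*h1 - \<pi>s*(\<sigma>p+\<sigma>m)))"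
      by (simp add: power2_eq_square algebra_simps)
    have id2: "\<pi>s*(2*h1 - \<pi>s*(\<sigma>p+\<sigma>m)) = h1^2*\<sigma>m*(2*k1 - \<sigma>m*(\<sigma>p+\<sigma>m))/k1^2"
      unfolding ps using k1p by (simp add: field_simps power2_eq_square)
    have "2*k1 - \<sigma>m*(\<sigma>p+\<sigma>m) \<ge> 0" using True unfolding k1_def by (simp add: power2_eq_square algebra_simps)
    hence Xnn: "h1^2*\<sigma>m*(2*k1 - \<sigma>m*(\<sigma>p+\<sigma>m))/k1^2 \<ge> 0" using assms by simp
    have dnn: "\<sigma>p - \<sigma>m \<ge> 0" using assms(4) by simp
    have "(h1-\<pi>s*\<sigma>m)^2 - (h1-\<pi>s*\<sigma>p)^2 \<ge> 0" unfolding id1 id2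
      by (rule mult_nonneg_nonneg[OF dnn Xnn])
    hence Gs: "G \<pi>s = (\<pi>s*\<mu>p)^2 + (h1-\<pi>s*\<sigma>m)^2" unfolding G_def by simp
    show ?thesis using Gge1 q1 A0 Gs unfolding k1_def e_def by simp
  next
    case False
    define sM where "sM = (\<sigma>p + \<sigma>m) / 2"
    have sMp: "sM > 0" unfolding sM_def using assms by simp
    have ps: "\<pi>s = h1 / sM" unfolding \<pi>s_def sM_def using False by simp
    have eqA: "k1*\<pi>s - h1*\<sigma>m = h1*(k1 - \<sigma>m*sM)/sM" unfolding ps using sMp by (simp add: field_simps)
    have eqB: "k2*\<pi>s - h1*\<sigma>p = h1*(k2 - \<sigma>p*sM)/sM" unfolding ps using sMp by (simp add: field_simps)
    have c1: "k1 - \<sigma>m*sM \<le> 0" using False unfolding k1_def sM_def by (simp add: power2_eq_square algebra_simps)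
    have c2e: "k2 - \<sigma>p*sM = \<mu>p^2 + \<sigma>p*(\<sigma>p-\<sigma>m)/2"
      unfolding k2_def sM_def by (simp add: power2_eq_square field_simps)
    have "\<sigma>p*(\<sigma>p-\<sigma>m)/2 \<ge> 0" using assms(3,4) by simp
    hence c2: "k2 - \<sigma>p*sM \<ge> 0" unfolding c2e by (simp add: add_nonneg_nonneg)
    have PQ: "(k1 - \<sigma>m*sM)*(k2 - \<sigma>p*sM) \<le> 0" using c1 c2 by (simp add: mult_nonpos_nonneg)
    hence AB: "(k1*\<pi>s - h1*\<sigma>m)*(k2*\<pi>s - h1*\<sigma>p) \<le> 0"
    proof -
      have "(h1*(k1 - \<sigma>m*sM)/sM)*(h1*(k2 - \<sigma>p*sM)/sM) = (h1^2/sM^2)*((k1 - \<sigma>m*sM)*(k2 - \<sigma>p*sM))"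
        using sMp by (simp add: power2_eq_square field_simps)
      also have "\<dots> \<le> 0" by (rule mult_nonneg_nonpos[OF _ PQ]) simp
      finally show ?thesis unfolding eqA eqB .
    qed
    have "(e*(k1*\<pi>s - h1*\<sigma>m))*(e*(k2*\<pi>s - h1*\<sigma>p)) = e^2*((k1*\<pi>s - h1*\<sigma>m)*(k2*\<pi>s - h1*\<sigma>p))"
      by (simp add: power2_eq_square algebra_simps)
    also have "\<dots> \<le> 0" using AB by (simp add: mult_nonneg_nonpos)
    finally have or: "e*(k1*\<pi>s - h1*\<sigma>m) \<ge> 0 \<or> e*(k2*\<pi>s - h1*\<sigma>p) \<ge> 0"
      by (rule prod_nonpos_or)
    have "h1 - \<pi>s*\<sigma>m = -(h1 - \<pi>s*\<sigma>p)" unfolding ps sM_def using assms by (simp add: field_simps)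
    hence sq: "(h1 - \<pi>s*\<sigma>m)^2 = (h1 - \<pi>s*\<sigma>p)^2" by (metis power2_minus)
    hence Gs1: "G \<pi>s = (\<pi>s*\<mu>p)^2 + (h1-\<pi>s*\<sigma>m)^2" unfolding G_def by simp
    have Gs2: "G \<pi>s = (\<pi>s*\<mu>p)^2 + (h1-\<pi>s*\<sigma>p)^2" using Gs1 sq by simp
    have "k1*e^2 \<le> k2*e^2" using k12 by (simp add: mult_right_mono)
    thus ?thesis using or Gge1 Gge2 q1 q2 Gs1 Gs2 unfolding k1_def[symmetric] e_def[symmetric] by linarith
  qed
qed

theorem mainTheorem9:
  fixes h0 h1 \<mu>m \<mu>p \<sigma>m \<sigma>p :: real
  assumes "0 < \<mu>m" "\<mu>m < \<mu>p" "0 < \<sigma>m" "\<sigma>m < \<sigma>p"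
    and "h0 = 0"
  defines "\<pi>s \<equiv> (if \<sigma>p * \<sigma>m - 2 * \<mu>p^2 \<le> \<sigma>m^2
                  then h1 * \<sigma>m / (\<sigma>m^2 + \<mu>p^2)
                  else h1 / ((\<sigma>p + \<sigma>m) / 2))"
  shows "(\<forall>\<pi>. maxF h0 h1 \<mu>m \<mu>p \<sigma>m \<sigma>p \<pi>s \<le> maxF h0 h1 \<mu>m \<mu>p \<sigma>m \<sigma>p \<pi>)
       \<and> (\<forall>\<pi>. maxF h0 h1 \<mu>m \<mu>p \<sigma>m \<sigma>p \<pi> \<le> maxF h0 h1 \<mu>m \<mu>p \<sigma>m \<sigma>p \<pi>s \<longrightarrow> \<pi> = \<pi>s)
       \<and> (\<exists>y\<in>{\<sigma>m..\<sigma>p}. \<forall>x'\<in>{\<mu>m..\<mu>p}. \<forall>y'\<in>{\<sigma>m..\<sigma>p}.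
              psi h0 h1 \<mu>m \<mu>p \<sigma>m \<sigma>p \<mu>p y \<le> psi h0 h1 \<mu>m \<mu>p \<sigma>m \<sigma>p x' y')"
proof (intro conjI allI impI)
  have k1p: "\<mu>p^2+\<sigma>m^2 > 0" using assms by (simp add: add_pos_pos)
  note K = key[OF assms(1-4), of h1, folded \<pi>s_def]
  note M = maxF_eq[OF assms(1-4), of h1]
  fix \<pi>
  have "0 \<le> (\<mu>p^2+\<sigma>m^2)*(\<pi>-\<pi>s)^2" using k1p by simp
  thus "maxF h0 h1 \<mu>m \<mu>p \<sigma>m \<sigma>p \<pi>s \<le> maxF h0 h1 \<mu>m \<mu>p \<sigma>m \<sigma>p \<pi>"
    using K[of \<pi>] unfolding M assms(5) by linarith
next
  have k1p: "\<mu>p^2+\<sigma>m^2 > 0" using assms by (simp add: add_pos_pos)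
  note K = key[OF assms(1-4), of h1, folded \<pi>s_def]
  note M = maxF_eq[OF assms(1-4), of h1]
  fix \<pi>
  assume "maxF h0 h1 \<mu>m \<mu>p \<sigma>m \<sigma>p \<pi> \<le> maxF h0 h1 \<mu>m \<mu>p \<sigma>m \<sigma>p \<pi>s"
  hence "(\<mu>p^2+\<sigma>m^2)*(\<pi>-\<pi>s)^2 \<le> 0" using K[of \<pi>] unfolding M assms(5) by linarith
  hence "(\<pi>-\<pi>s)^2 \<le> 0" using k1p by (simp add: mult_le_0_iff)
  thus "\<pi> = \<pi>s" by simp
next
  define Dn where "Dn = (\<lambda>x y. 2 * ((\<mu>p + \<mu>m) / 2) * x + 2 * ((\<sigma>p + \<sigma>m) / 2) * y - \<mu>m * \<mu>p - \<sigma>m * \<sigma>p)"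
  have ps: "psi h0 h1 \<mu>m \<mu>p \<sigma>m \<sigma>p x y = (h1*y)^2 / Dn x y" for x y
    unfolding psi_def Dn_def assms(5) by simp
  have Dn_eq: "Dn x y = \<mu>m^2 + \<sigma>m^2 + (\<mu>p+\<mu>m)*(x-\<mu>m) + (\<sigma>p+\<sigma>m)*(y-\<sigma>m)" for x y
  proof -
    have two: "2*((\<mu>p+\<mu>m)/2) = \<mu>p+\<mu>m" "2*((\<sigma>p+\<sigma>m)/2) = \<sigma>p+\<sigma>m" by simp_all
    show ?thesis unfolding Dn_def two by (simp add: power2_eq_square algebra_simps)
  qed
  have Dpos: "Dn x y > 0" if "\<mu>m \<le> x" "\<sigma>m \<le> y" for x y
  proof -
    have "(\<mu>p+\<mu>m)*(x-\<mu>m) \<ge> 0" using that assms(1,2) by simp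
    moreover have "(\<sigma>p+\<sigma>m)*(y-\<sigma>m) \<ge> 0" using that assms(3,4) by simp
    moreover have "\<mu>m^2 + \<sigma>m^2 > 0" using assms(1,3) by (simp add: add_pos_pos)
    ultimately show ?thesis unfolding Dn_eq by linarith
  qed
  have mono: "psi h0 h1 \<mu>m \<mu>p \<sigma>m \<sigma>p \<mu>p y' \<le> psi h0 h1 \<mu>m \<mu>p \<sigma>m \<sigma>p x' y'"
    if "x' \<in> {\<mu>m..\<mu>p}" "y' \<in> {\<sigma>m..\<sigma>p}" for x' y'
  proof -
    have "(\<mu>p+\<mu>m)*(x'-\<mu>m) \<le> (\<mu>p+\<mu>m)*(\<mu>p-\<mu>m)" using that assms(1,2) by (intro mult_left_mono) auto
    hence le: "Dn x' y' \<le> Dn \<mu>p y'" unfolding Dn_eq by linarith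
    have p1: "Dn x' y' > 0" using Dpos that by simp
    have p2: "Dn \<mu>p y' > 0" using Dpos that assms(2) by simp
    have "(h1*y')^2 / Dn \<mu>p y' \<le> (h1*y')^2 / Dn x' y'"
      by (rule divide_left_mono[OF le]) (use p1 p2 in simp_all)
    thus ?thesis unfolding ps .
  qed
  have cD: "continuous_on {\<sigma>m..\<sigma>p} (\<lambda>y. Dn \<mu>p y)" unfolding Dn_def by (intro continuous_intros)
  have cN: "continuous_on {\<sigma>m..\<sigma>p} (\<lambda>y. (h1*y)^2)" by (intro continuous_intros)
  have nz: "\<forall>y\<in>{\<sigma>m..\<sigma>p}. Dn \<mu>p y \<noteq> 0"
  proof
    fix y assume "y \<in> {\<sigma>m..\<sigma>p}"
    hence "Dn \<mu>p y > 0" using Dpos[of \<mu>p y] assms(2) by simp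
    thus "Dn \<mu>p y \<noteq> 0" by simp
  qed
  have cont: "continuous_on {\<sigma>m..\<sigma>p} (\<lambda>y. (h1*y)^2 / Dn \<mu>p y)"
    by (rule continuous_on_divide[OF cN cD nz])
  have ne: "{\<sigma>m..\<sigma>p} \<noteq> {}" using assms(4) by simp
  obtain y where y: "y \<in> {\<sigma>m..\<sigma>p}" and ymin: "\<forall>y'\<in>{\<sigma>m..\<sigma>p}. (h1*y)^2 / Dn \<mu>p y \<le> (h1*y')^2 / Dn \<mu>p y'"
    using continuous_attains_inf[OF compact_Icc ne cont] by blast
  show "\<exists>y\<in>{\<sigma>m..\<sigma>p}. \<forall>x'\<in>{\<mu>m..\<mu>p}. \<forall>y'\<in>{\<sigma>m..\<sigma>p}.
              psi h0 h1 \<mu>m \<mu>p \<sigma>m \<sigma>p \<mu>p y \<le> psi h0 h1 \<mu>m \<mu>p \<sigma>m \<sigma>p x' y'"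
  proof (intro bexI[OF _ y] ballI)
    fix x' y' assume a: "x' \<in> {\<mu>m..\<mu>p}" "y' \<in> {\<sigma>m..\<sigma>p}"
    have "psi h0 h1 \<mu>m \<mu>p \<sigma>m \<sigma>p \<mu>p y \<le> psi h0 h1 \<mu>m \<mu>p \<sigma>m \<sigma>p \<mu>p y'"
      unfolding ps using ymin a(2) by blast
    also have "\<dots> \<le> psi h0 h1 \<mu>m \<mu>p \<sigma>m \<sigma>p x' y'" by (rule mono[OF a])
    finally show "psi h0 h1 \<mu>m \<mu>p \<sigma>m \<sigma>p \<mu>p y \<le> psi h0 h1 \<mu>m \<mu>p \<sigma>m \<sigma>p x' y'" .
  qed
qed

end
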